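(* Let $\lambda,\mu\in P^+$ for $\mathfrak g$ of type $C_2$. Then there exists a bijection $\mathcal S^{C}_{\lambda,\mu}\to\mathcal T^{C}_{\lambda,\mu}$.
   Context: $m_i=\lambda(h_i)$, $n_i=\mu(h_i)$ are non-negative integers ($\alpha_1$ is the short simple root). $\mathcal S^{C}_{\lambda,\mu}=\{(a,b,c,d)\in\mathbb Z_+^4: a\le\min\{m_1,n_1\},\ d\le\min\{m_2,n_2\},\ a+b+c\le\min\{m_1+m_2,n_1+n_2\},\ a+b+d\le\min\{m_1+m_2,n_1+n_2\},\ 2a+b\le m_1+n_1,\ 2d+b\le m_2+n_2,\ 2a+b+2(c-d)\le m_1+n_1\}$. $\mathcal T^{C}_{\lambda,\mu}=\{(a,b,c,d)\in\mathbb Z_+^4: a\le m_1,\ c\le m_2,\ d\le n_2,\ b\le n_1,\ c+b-a\le m_2,\ d+b-a\le m_2,\ a+2(c-d)\le n_1,\ b+2(c-d)\le n_1\}$. *)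

theory Defs
  imports Main
begin

text \<open>Weights lambda, mu of C2 are given by m_i = lambda(h_i), n_i = mu(h_i), nonnegative integers
 (alpha_1 short). Tuples (a,b,c,d) range over Z_+^4; we use int with nonnegativity so that
 differences such as c - d are genuine integer differences.\<close>

definition S_C :: "nat \<Rightarrow> nat \<Rightarrow> nat \<Rightarrow> nat \<Rightarrow> (int \<times> int \<times> int \<times> int) set" where
  "S_C m1 m2 n1 n2 = {(a,b,c,d). 0 \<le> a \<and> 0 \<le> b \<and> 0 \<le> c \<and> 0 \<le> d \<and>
     a \<le> min (int m1) (int n1) \<and> d \<le> min (int m2) (int n2) \<and>
     a + b + c \<le> min (int m1 + int m2) (int n1 + int n2) \<and>
     a + b + d \<le> min (int m1 + int m2) (int n1 + int n2) \<and>
     2*a + b \<le> int m1 + int n1 \<and> 2*d + b \<le> int m2 + int n2 \<and>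
     2*a + b + 2*(c - d) \<le> int m1 + int n1}"

definition T_C :: "nat \<Rightarrow> nat \<Rightarrow> nat \<Rightarrow> nat \<Rightarrow> (int \<times> int \<times> int \<times> int) set" where
  "T_C m1 m2 n1 n2 = {(a,b,c,d). 0 \<le> a \<and> 0 \<le> b \<and> 0 \<le> c \<and> 0 \<le> d \<and>
     a \<le> int m1 \<and> c \<le> int m2 \<and> d \<le> int n2 \<and> b \<le> int n1 \<and>
     c + b - a \<le> int m2 \<and> d + b - a \<le> int m2 \<and>
     a + 2*(c - d) \<le> int n1 \<and> b + 2*(c - d) \<le> int n1}"

end

theory Submission imports Defs begin

definition loS :: "int\<Rightarrow>int\<Rightarrow>int\<Rightarrow>int\<Rightarrow>int\<Rightarrow>int\<Rightarrow>int\<Rightarrow>int" where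
 "loS m1 m2 n1 n2 u v k = max 1 (max (-u) (2*u+v-2*k-(m1+n1)))"
definition CS :: "int\<Rightarrow>int\<Rightarrow>int\<Rightarrow>int\<Rightarrow>int\<Rightarrow>int\<Rightarrow>int\<Rightarrow>int" where
 "CS m1 m2 n1 n2 u v k = min (v-2*k) (min (min m1 n1-u) (min (min m2 n2-k)
    (min (min (m1+m2) (n1+n2)-u-v+k) (min (m1+n1-2*u-v+2*k) (m2+n2-v)))))"
definition negS where
 "negS m1 m2 n1 n2 u v k = (0 \<le> k \<and> u+v-k \<le> min (m1+m2) (n1+n2) \<and> loS m1 m2 n1 n2 u v k \<le> CS m1 m2 n1 n2 u v k)"
definition AS :: "int\<Rightarrow>int\<Rightarrow>int\<Rightarrow>int\<Rightarrow>int\<Rightarrow>int\<Rightarrow>int\<Rightarrow>int" where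
 "AS m1 m2 n1 n2 u v k = max 0 (max (u - min m1 n1) (max (u+v-k-min (m1+m2) (n1+n2)) (max (v-(m2+n2)) (2*u+v-2*k-(m1+n1)))))"
definition BS :: "int\<Rightarrow>int\<Rightarrow>int\<Rightarrow>int\<Rightarrow>int\<Rightarrow>int\<Rightarrow>int\<Rightarrow>int" where
 "BS m1 m2 n1 n2 u v k = min u (v-2*k)"
definition posS where
 "posS m1 m2 n1 n2 u v k = (0 \<le> k \<and> k \<le> min m2 n2 \<and> AS m1 m2 n1 n2 u v k \<le> BS m1 m2 n1 n2 u v k)"
definition LS where "LS m1 m2 n1 n2 u v k = (if negS m1 m2 n1 n2 u v k then - CS m1 m2 n1 n2 u v k else AS m1 m2 n1 n2 u v k)"
definition HS where "HS m1 m2 n1 n2 u v k = (if posS m1 m2 n1 n2 u v k then BS m1 m2 n1 n2 u v k else - loS m1 m2 n1 n2 u v k)"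

definition AT :: "int\<Rightarrow>int\<Rightarrow>int\<Rightarrow>int\<Rightarrow>int\<Rightarrow>int\<Rightarrow>int\<Rightarrow>int" where
 "AT m1 m2 n1 n2 u v k = max 0 (max (u-m1) (v-2*k-n1))"
definition BT :: "int\<Rightarrow>int\<Rightarrow>int\<Rightarrow>int\<Rightarrow>int\<Rightarrow>int\<Rightarrow>int\<Rightarrow>int" where
 "BT m1 m2 n1 n2 u v k = min u (min (m2-k) (min (v-2*k) (min (m2+u+k-v) (min (n1-u) (n1-v+2*k)))))"
definition posT where
 "posT m1 m2 n1 n2 u v k = (0 \<le> k \<and> k \<le> n2 \<and> v-k-u \<le> m2 \<and> AT m1 m2 n1 n2 u v k \<le> BT m1 m2 n1 n2 u v k)"
definition loT :: "int\<Rightarrow>int\<Rightarrow>int\<Rightarrow>int\<Rightarrow>int\<Rightarrow>int\<Rightarrow>int\<Rightarrow>int" where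
 "loT m1 m2 n1 n2 u v k = max 1 (max (-u) (max (v-2*k-n1) (max (v-k-u-m2) (u-n1))))"
definition CT :: "int\<Rightarrow>int\<Rightarrow>int\<Rightarrow>int\<Rightarrow>int\<Rightarrow>int\<Rightarrow>int\<Rightarrow>int" where
 "CT m1 m2 n1 n2 u v k = min (m1-u) (min (n2-k) (v-2*k))"
definition negT where
 "negT m1 m2 n1 n2 u v k = (0 \<le> k \<and> k \<le> m2 \<and> loT m1 m2 n1 n2 u v k \<le> CT m1 m2 n1 n2 u v k)"
definition LT where "LT m1 m2 n1 n2 u v k = (if negT m1 m2 n1 n2 u v k then - CT m1 m2 n1 n2 u v k else AT m1 m2 n1 n2 u v k)"
definition HT where "HT m1 m2 n1 n2 u v k = (if posT m1 m2 n1 n2 u v k then BT m1 m2 n1 n2 u v k else - loT m1 m2 n1 n2 u v k)"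

definition "lenS m1 m2 n1 n2 u v k = (if negS m1 m2 n1 n2 u v k then CS m1 m2 n1 n2 u v k - loS m1 m2 n1 n2 u v k + 1 else 0)
   + (if posS m1 m2 n1 n2 u v k then BS m1 m2 n1 n2 u v k - AS m1 m2 n1 n2 u v k + 1 else 0)"
definition "lenT m1 m2 n1 n2 u v k = (if negT m1 m2 n1 n2 u v k then CT m1 m2 n1 n2 u v k - loT m1 m2 n1 n2 u v k + 1 else 0)
   + (if posT m1 m2 n1 n2 u v k then BT m1 m2 n1 n2 u v k - AT m1 m2 n1 n2 u v k + 1 else 0)"

lemma key:
  fixes m1 m2 n1 n2 u v k :: int
  assumes "0 \<le> m1" "0 \<le> m2" "0 \<le> n1" "0 \<le> n2"
  shows "lenS m1 m2 n1 n2 u v k = lenT m1 m2 n1 n2 u v k"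
proof -
  define p1 where "p1 = min m1 n1"
  define p2 where "p2 = min m2 n2"
  define M where "M = min (m1+m2) (n1+n2)"
  have hp1: "p1 \<le> m1 \<and> p1 \<le> n1 \<and> (p1 = m1 \<or> p1 = n1)" unfolding p1_def by auto
  have hp2: "p2 \<le> m2 \<and> p2 \<le> n2 \<and> (p2 = m2 \<or> p2 = n2)" unfolding p2_def by auto
  have hM: "M \<le> m1+m2 \<and> M \<le> n1+n2 \<and> (M = m1+m2 \<or> M = n1+n2)" unfolding M_def by auto
  define ls where "ls = loS m1 m2 n1 n2 u v k"
  have hls: "ls \<ge> 1 \<and> ls \<ge> -u \<and> ls \<ge> 2*u+v-2*k-(m1+n1) \<and> (ls = 1 \<or> ls = -u \<or> ls = 2*u+v-2*k-(m1+n1))"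
    unfolding ls_def loS_def by auto
  define cs where "cs = CS m1 m2 n1 n2 u v k"
  have hcs: "cs \<le> v-2*k \<and> cs \<le> p1-u \<and> cs \<le> p2-k \<and> cs \<le> M-u-v+k \<and> cs \<le> m1+n1-2*u-v+2*k \<and> cs \<le> m2+n2-v
    \<and> (cs = v-2*k \<or> cs = p1-u \<or> cs = p2-k \<or> cs = M-u-v+k \<or> cs = m1+n1-2*u-v+2*k \<or> cs = m2+n2-v)"
    unfolding cs_def CS_def p1_def p2_def M_def by (auto simp: min_def)
  define as where "as = AS m1 m2 n1 n2 u v k"
  have has: "as \<ge> 0 \<and> as \<ge> u-p1 \<and> as \<ge> u+v-k-M \<and> as \<ge> v-(m2+n2) \<and> as \<ge> 2*u+v-2*k-(m1+n1)
    \<and> (as = 0 \<or> as = u-p1 \<or> as = u+v-k-M \<or> as = v-(m2+n2) \<or> as = 2*u+v-2*k-(m1+n1))"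
    unfolding as_def AS_def p1_def M_def by (auto simp: max_def)
  define bs where "bs = BS m1 m2 n1 n2 u v k"
  have hbs: "bs \<le> u \<and> bs \<le> v-2*k \<and> (bs = u \<or> bs = v-2*k)" unfolding bs_def BS_def by auto
  define at where "at = AT m1 m2 n1 n2 u v k"
  have hat: "at \<ge> 0 \<and> at \<ge> u-m1 \<and> at \<ge> v-2*k-n1 \<and> (at = 0 \<or> at = u-m1 \<or> at = v-2*k-n1)"
    unfolding at_def AT_def by auto
  define bt where "bt = BT m1 m2 n1 n2 u v k"
  have hbt: "bt \<le> u \<and> bt \<le> m2-k \<and> bt \<le> v-2*k \<and> bt \<le> m2+u+k-v \<and> bt \<le> n1-u \<and> bt \<le> n1-v+2*k
    \<and> (bt = u \<or> bt = m2-k \<or> bt = v-2*k \<or> bt = m2+u+k-v \<or> bt = n1-u \<or> bt = n1-v+2*k)"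
    unfolding bt_def BT_def by (auto simp: min_def)
  define lt where "lt = loT m1 m2 n1 n2 u v k"
  have hlt: "lt \<ge> 1 \<and> lt \<ge> -u \<and> lt \<ge> v-2*k-n1 \<and> lt \<ge> v-k-u-m2 \<and> lt \<ge> u-n1
    \<and> (lt = 1 \<or> lt = -u \<or> lt = v-2*k-n1 \<or> lt = v-k-u-m2 \<or> lt = u-n1)"
    unfolding lt_def loT_def by (auto simp: max_def)
  define ct where "ct = CT m1 m2 n1 n2 u v k"
  have hct: "ct \<le> m1-u \<and> ct \<le> n2-k \<and> ct \<le> v-2*k \<and> (ct = m1-u \<or> ct = n2-k \<or> ct = v-2*k)"
    unfolding ct_def CT_def by auto
  have eS: "lenS m1 m2 n1 n2 u v k = (if 0 \<le> k \<and> u+v-k \<le> M \<and> ls \<le> cs then cs - ls + 1 else 0)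
      + (if 0 \<le> k \<and> k \<le> p2 \<and> as \<le> bs then bs - as + 1 else 0)"
    unfolding lenS_def negS_def posS_def ls_def cs_def as_def bs_def p2_def M_def by simp
  have eT: "lenT m1 m2 n1 n2 u v k = (if 0 \<le> k \<and> k \<le> m2 \<and> lt \<le> ct then ct - lt + 1 else 0)
      + (if 0 \<le> k \<and> k \<le> n2 \<and> v-k-u \<le> m2 \<and> at \<le> bt then bt - at + 1 else 0)"
    unfolding lenT_def negT_def posT_def lt_def ct_def at_def bt_def by simp
  show ?thesis unfolding eS eT using hp1 hp2 hM hls hcs has hbs hat hbt hlt hct assms
    by (smt (z3))
qed


lemma S_facts:
  fixes m1 m2 n1 n2 u v k :: int
  shows "loS m1 m2 n1 n2 u v k \<ge> 1 \<and> loS m1 m2 n1 n2 u v k \<ge> -u \<and> loS m1 m2 n1 n2 u v k \<ge> 2*u+v-2*k-(m1+n1)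
     \<and> (loS m1 m2 n1 n2 u v k = 1 \<or> loS m1 m2 n1 n2 u v k = -u \<or> loS m1 m2 n1 n2 u v k = 2*u+v-2*k-(m1+n1))"
  and "CS m1 m2 n1 n2 u v k \<le> v-2*k \<and> CS m1 m2 n1 n2 u v k \<le> min m1 n1-u \<and> CS m1 m2 n1 n2 u v k \<le> min m2 n2-k
     \<and> CS m1 m2 n1 n2 u v k \<le> min (m1+m2) (n1+n2)-u-v+k \<and> CS m1 m2 n1 n2 u v k \<le> m1+n1-2*u-v+2*k \<and> CS m1 m2 n1 n2 u v k \<le> m2+n2-v
    \<and> (CS m1 m2 n1 n2 u v k = v-2*k \<or> CS m1 m2 n1 n2 u v k = min m1 n1-u \<or> CS m1 m2 n1 n2 u v k = min m2 n2-k
     \<or> CS m1 m2 n1 n2 u v k = min (m1+m2) (n1+n2)-u-v+k \<or> CS m1 m2 n1 n2 u v k = m1+n1-2*u-v+2*k \<or> CS m1 m2 n1 n2 u v k = m2+n2-v)"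
  and "AS m1 m2 n1 n2 u v k \<ge> 0 \<and> AS m1 m2 n1 n2 u v k \<ge> u-min m1 n1 \<and> AS m1 m2 n1 n2 u v k \<ge> u+v-k-min (m1+m2) (n1+n2)
     \<and> AS m1 m2 n1 n2 u v k \<ge> v-(m2+n2) \<and> AS m1 m2 n1 n2 u v k \<ge> 2*u+v-2*k-(m1+n1)
    \<and> (AS m1 m2 n1 n2 u v k = 0 \<or> AS m1 m2 n1 n2 u v k = u-min m1 n1 \<or> AS m1 m2 n1 n2 u v k = u+v-k-min (m1+m2) (n1+n2)
     \<or> AS m1 m2 n1 n2 u v k = v-(m2+n2) \<or> AS m1 m2 n1 n2 u v k = 2*u+v-2*k-(m1+n1))"
  and "BS m1 m2 n1 n2 u v k \<le> u \<and> BS m1 m2 n1 n2 u v k \<le> v-2*k \<and> (BS m1 m2 n1 n2 u v k = u \<or> BS m1 m2 n1 n2 u v k = v-2*k)"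
  unfolding loS_def CS_def AS_def BS_def by (auto simp: min_def max_def)

lemma T_facts:
  fixes m1 m2 n1 n2 u v k :: int
  shows "AT m1 m2 n1 n2 u v k \<ge> 0 \<and> AT m1 m2 n1 n2 u v k \<ge> u-m1 \<and> AT m1 m2 n1 n2 u v k \<ge> v-2*k-n1
     \<and> (AT m1 m2 n1 n2 u v k = 0 \<or> AT m1 m2 n1 n2 u v k = u-m1 \<or> AT m1 m2 n1 n2 u v k = v-2*k-n1)"
  and "BT m1 m2 n1 n2 u v k \<le> u \<and> BT m1 m2 n1 n2 u v k \<le> m2-k \<and> BT m1 m2 n1 n2 u v k \<le> v-2*k
     \<and> BT m1 m2 n1 n2 u v k \<le> m2+u+k-v \<and> BT m1 m2 n1 n2 u v k \<le> n1-u \<and> BT m1 m2 n1 n2 u v k \<le> n1-v+2*k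
    \<and> (BT m1 m2 n1 n2 u v k = u \<or> BT m1 m2 n1 n2 u v k = m2-k \<or> BT m1 m2 n1 n2 u v k = v-2*k
     \<or> BT m1 m2 n1 n2 u v k = m2+u+k-v \<or> BT m1 m2 n1 n2 u v k = n1-u \<or> BT m1 m2 n1 n2 u v k = n1-v+2*k)"
  and "loT m1 m2 n1 n2 u v k \<ge> 1 \<and> loT m1 m2 n1 n2 u v k \<ge> -u \<and> loT m1 m2 n1 n2 u v k \<ge> v-2*k-n1
     \<and> loT m1 m2 n1 n2 u v k \<ge> v-k-u-m2 \<and> loT m1 m2 n1 n2 u v k \<ge> u-n1
    \<and> (loT m1 m2 n1 n2 u v k = 1 \<or> loT m1 m2 n1 n2 u v k = -u \<or> loT m1 m2 n1 n2 u v k = v-2*k-n1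
     \<or> loT m1 m2 n1 n2 u v k = v-k-u-m2 \<or> loT m1 m2 n1 n2 u v k = u-n1)"
  and "CT m1 m2 n1 n2 u v k \<le> m1-u \<and> CT m1 m2 n1 n2 u v k \<le> n2-k \<and> CT m1 m2 n1 n2 u v k \<le> v-2*k
     \<and> (CT m1 m2 n1 n2 u v k = m1-u \<or> CT m1 m2 n1 n2 u v k = n2-k \<or> CT m1 m2 n1 n2 u v k = v-2*k)"
  unfolding AT_def BT_def loT_def CT_def by (auto simp: min_def max_def)

definition pt :: "int \<Rightarrow> int \<Rightarrow> int \<Rightarrow> int \<Rightarrow> int \<times> int \<times> int \<times> int" where
  "pt u v k e = (u - e, v - 2*k - \<bar>e\<bar>, k + max e 0, k + max (-e) 0)"

lemma pt_inv: "pt (a+c-d) (b+c+d) (min c d) (c-d) = (a,b,c,d)"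
  unfolding pt_def by (auto simp: min_def max_def abs_if)

lemma pt_stats: assumes "pt u v k e = (a,b,c,d)" shows "a+c-d = u" "b+c+d = v" "min c d = k" "c - d = e"
  using assms unfolding pt_def by (auto simp: min_def max_def abs_if split: if_splits)

lemma FS:
  fixes m1 m2 n1 n2 u v k e :: int
  assumes "0 \<le> m1" "0 \<le> m2" "0 \<le> n1" "0 \<le> n2"
  shows "pt u v k e \<in> S_C (nat m1) (nat m2) (nat n1) (nat n2) \<longleftrightarrow>
    ((0 \<le> e \<and> posS m1 m2 n1 n2 u v k \<and> AS m1 m2 n1 n2 u v k \<le> e \<and> e \<le> BS m1 m2 n1 n2 u v k)
   \<or> (e < 0 \<and> negS m1 m2 n1 n2 u v k \<and> loS m1 m2 n1 n2 u v k \<le> -e \<and> -e \<le> CS m1 m2 n1 n2 u v k))"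
proof -
  have i: "int (nat m1) = m1" "int (nat m2) = m2" "int (nat n1) = n1" "int (nat n2) = n2" using assms by auto
  show ?thesis
  proof (cases "0 \<le> e")
    case True
    then have p: "pt u v k e = (u-e, v-2*k-e, k+e, k)" unfolding pt_def by simp
    show ?thesis unfolding p S_C_def mem_Collect_eq prod.case i posS_def
      using S_facts[of m1 m2 n1 n2 u v k] True by (smt (z3))
  next
    case False
    then have p: "pt u v k e = (u-e, v-2*k+e, k, k-e)" unfolding pt_def by simp
    show ?thesis unfolding p S_C_def mem_Collect_eq prod.case i negS_def
      using S_facts[of m1 m2 n1 n2 u v k] False by (smt (z3))
  qed
qed


lemma FT:
  fixes m1 m2 n1 n2 u v k e :: int
  assumes "0 \<le> m1" "0 \<le> m2" "0 \<le> n1" "0 \<le> n2"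
  shows "pt u v k e \<in> T_C (nat m1) (nat m2) (nat n1) (nat n2) \<longleftrightarrow>
    ((0 \<le> e \<and> posT m1 m2 n1 n2 u v k \<and> AT m1 m2 n1 n2 u v k \<le> e \<and> e \<le> BT m1 m2 n1 n2 u v k)
   \<or> (e < 0 \<and> negT m1 m2 n1 n2 u v k \<and> loT m1 m2 n1 n2 u v k \<le> -e \<and> -e \<le> CT m1 m2 n1 n2 u v k))"
proof -
  have i: "int (nat m1) = m1" "int (nat m2) = m2" "int (nat n1) = n1" "int (nat n2) = n2" using assms by auto
  show ?thesis
  proof (cases "0 \<le> e")
    case True
    then have p: "pt u v k e = (u-e, v-2*k-e, k+e, k)" unfolding pt_def by simp
    show ?thesis unfolding p T_C_def mem_Collect_eq prod.case i posT_def
      using T_facts[of m1 m2 n1 n2 u v k] True by (smt (z3))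
  next
    case False
    then have p: "pt u v k e = (u-e, v-2*k+e, k, k-e)" unfolding pt_def by simp
    show ?thesis unfolding p T_C_def mem_Collect_eq prod.case i negT_def
      using T_facts[of m1 m2 n1 n2 u v k] False by (smt (z3))
  qed
qed

lemma IS:
  fixes m1 m2 n1 n2 u v k e :: int
  shows "((0 \<le> e \<and> posS m1 m2 n1 n2 u v k \<and> AS m1 m2 n1 n2 u v k \<le> e \<and> e \<le> BS m1 m2 n1 n2 u v k)
   \<or> (e < 0 \<and> negS m1 m2 n1 n2 u v k \<and> loS m1 m2 n1 n2 u v k \<le> -e \<and> -e \<le> CS m1 m2 n1 n2 u v k))
   \<longleftrightarrow> (0 < lenS m1 m2 n1 n2 u v k \<and> LS m1 m2 n1 n2 u v k \<le> e \<and> e \<le> LS m1 m2 n1 n2 u v k + lenS m1 m2 n1 n2 u v k - 1)"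
  unfolding lenS_def LS_def negS_def posS_def
  using S_facts[of m1 m2 n1 n2 u v k] by (smt (z3))

lemma IT:
  fixes m1 m2 n1 n2 u v k e :: int
  shows "((0 \<le> e \<and> posT m1 m2 n1 n2 u v k \<and> AT m1 m2 n1 n2 u v k \<le> e \<and> e \<le> BT m1 m2 n1 n2 u v k)
   \<or> (e < 0 \<and> negT m1 m2 n1 n2 u v k \<and> loT m1 m2 n1 n2 u v k \<le> -e \<and> -e \<le> CT m1 m2 n1 n2 u v k))
   \<longleftrightarrow> (0 < lenT m1 m2 n1 n2 u v k \<and> LT m1 m2 n1 n2 u v k \<le> e \<and> e \<le> LT m1 m2 n1 n2 u v k + lenT m1 m2 n1 n2 u v k - 1)"
  unfolding lenT_def LT_def negT_def posT_def
  using T_facts[of m1 m2 n1 n2 u v k] by (smt (z3))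


definition FF :: "int \<Rightarrow> int \<Rightarrow> int \<Rightarrow> int \<Rightarrow> int \<times> int \<times> int \<times> int \<Rightarrow> int \<times> int \<times> int \<times> int" where
  "FF m1 m2 n1 n2 x = (case x of (a,b,c,d) \<Rightarrow>
     pt (a+c-d) (b+c+d) (min c d) (c - d - LS m1 m2 n1 n2 (a+c-d) (b+c+d) (min c d) + LT m1 m2 n1 n2 (a+c-d) (b+c+d) (min c d)))"
definition GG :: "int \<Rightarrow> int \<Rightarrow> int \<Rightarrow> int \<Rightarrow> int \<times> int \<times> int \<times> int \<Rightarrow> int \<times> int \<times> int \<times> int" where
  "GG m1 m2 n1 n2 x = (case x of (a,b,c,d) \<Rightarrow>
     pt (a+c-d) (b+c+d) (min c d) (c - d - LT m1 m2 n1 n2 (a+c-d) (b+c+d) (min c d) + LS m1 m2 n1 n2 (a+c-d) (b+c+d) (min c d)))"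

lemma GF: "GG m1 m2 n1 n2 (FF m1 m2 n1 n2 x) = x"
proof -
  obtain a b c d where x: "x = (a,b,c,d)" by (cases x) auto
  define u where "u = a+c-d"
  define v where "v = b+c+d"
  define k where "k = min c d"
  define e where "e = c - d - LS m1 m2 n1 n2 u v k + LT m1 m2 n1 n2 u v k"
  obtain a' b' c' d' where q: "pt u v k e = (a',b',c',d')" by (cases "pt u v k e") auto
  note st = pt_stats[OF q]
  have "FF m1 m2 n1 n2 x = (a',b',c',d')" unfolding FF_def x u_def v_def k_def e_def q[symmetric, unfolded u_def v_def k_def e_def] by simp
  then have "GG m1 m2 n1 n2 (FF m1 m2 n1 n2 x) = pt u v k (c-d)"
    unfolding GG_def using st e_def by simp
  also have "\<dots> = x" unfolding x u_def v_def k_def by (rule pt_inv)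
  finally show ?thesis .
qed

lemma FG: "FF m1 m2 n1 n2 (GG m1 m2 n1 n2 x) = x"
proof -
  obtain a b c d where x: "x = (a,b,c,d)" by (cases x) auto
  define u where "u = a+c-d"
  define v where "v = b+c+d"
  define k where "k = min c d"
  define e where "e = c - d - LT m1 m2 n1 n2 u v k + LS m1 m2 n1 n2 u v k"
  obtain a' b' c' d' where q: "pt u v k e = (a',b',c',d')" by (cases "pt u v k e") auto
  note st = pt_stats[OF q]
  have "GG m1 m2 n1 n2 x = (a',b',c',d')" unfolding GG_def x u_def v_def k_def e_def q[symmetric, unfolded u_def v_def k_def e_def] by simp
  then have "FF m1 m2 n1 n2 (GG m1 m2 n1 n2 x) = pt u v k (c-d)"
    unfolding FF_def using st e_def by simp
  also have "\<dots> = x" unfolding x u_def v_def k_def by (rule pt_inv)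
  finally show ?thesis .
qed

lemma F_into:
  fixes m1 m2 n1 n2 :: int
  assumes m: "0 \<le> m1" "0 \<le> m2" "0 \<le> n1" "0 \<le> n2"
    and xS: "x \<in> S_C (nat m1) (nat m2) (nat n1) (nat n2)"
  shows "FF m1 m2 n1 n2 x \<in> T_C (nat m1) (nat m2) (nat n1) (nat n2)"
proof -
  obtain a b c d where x: "x = (a,b,c,d)" by (cases x) auto
  define u where "u = a+c-d"
  define v where "v = b+c+d"
  define k where "k = min c d"
  have "pt u v k (c-d) \<in> S_C (nat m1) (nat m2) (nat n1) (nat n2)"
    unfolding u_def v_def k_def pt_inv using xS x by simp
  then have h: "0 < lenS m1 m2 n1 n2 u v k \<and> LS m1 m2 n1 n2 u v k \<le> c-d \<and> c-d \<le> LS m1 m2 n1 n2 u v k + lenS m1 m2 n1 n2 u v k - 1"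
    using FS[OF m] IS by blast
  have eq: "lenS m1 m2 n1 n2 u v k = lenT m1 m2 n1 n2 u v k" using key[OF m] .
  define e where "e = c - d - LS m1 m2 n1 n2 u v k + LT m1 m2 n1 n2 u v k"
  have "0 < lenT m1 m2 n1 n2 u v k \<and> LT m1 m2 n1 n2 u v k \<le> e \<and> e \<le> LT m1 m2 n1 n2 u v k + lenT m1 m2 n1 n2 u v k - 1"
    using h eq unfolding e_def by linarith
  then have "pt u v k e \<in> T_C (nat m1) (nat m2) (nat n1) (nat n2)" using FT[OF m] IT by blast
  moreover have "FF m1 m2 n1 n2 x = pt u v k e" unfolding FF_def x u_def v_def k_def e_def by simp
  ultimately show ?thesis by simp
qed

lemma G_into:
  fixes m1 m2 n1 n2 :: int
  assumes m: "0 \<le> m1" "0 \<le> m2" "0 \<le> n1" "0 \<le> n2"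
    and xT: "x \<in> T_C (nat m1) (nat m2) (nat n1) (nat n2)"
  shows "GG m1 m2 n1 n2 x \<in> S_C (nat m1) (nat m2) (nat n1) (nat n2)"
proof -
  obtain a b c d where x: "x = (a,b,c,d)" by (cases x) auto
  define u where "u = a+c-d"
  define v where "v = b+c+d"
  define k where "k = min c d"
  have "pt u v k (c-d) \<in> T_C (nat m1) (nat m2) (nat n1) (nat n2)"
    unfolding u_def v_def k_def pt_inv using xT x by simp
  then have h: "0 < lenT m1 m2 n1 n2 u v k \<and> LT m1 m2 n1 n2 u v k \<le> c-d \<and> c-d \<le> LT m1 m2 n1 n2 u v k + lenT m1 m2 n1 n2 u v k - 1"
    using FT[OF m] IT by blast
  have eq: "lenS m1 m2 n1 n2 u v k = lenT m1 m2 n1 n2 u v k" using key[OF m] .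
  define e where "e = c - d - LT m1 m2 n1 n2 u v k + LS m1 m2 n1 n2 u v k"
  have "0 < lenS m1 m2 n1 n2 u v k \<and> LS m1 m2 n1 n2 u v k \<le> e \<and> e \<le> LS m1 m2 n1 n2 u v k + lenS m1 m2 n1 n2 u v k - 1"
    using h eq unfolding e_def by linarith
  then have "pt u v k e \<in> S_C (nat m1) (nat m2) (nat n1) (nat n2)" using FS[OF m] IS by blast
  moreover have "GG m1 m2 n1 n2 x = pt u v k e" unfolding GG_def x u_def v_def k_def e_def by simp
  ultimately show ?thesis by simp
qed

theorem lemma5p4:
  fixes m1 m2 n1 n2 :: nat
  shows "\<exists>f. bij_betw f (S_C m1 m2 n1 n2) (T_C m1 m2 n1 n2)"
proof -
  let ?F = "FF (int m1) (int m2) (int n1) (int n2)"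
  let ?G = "GG (int m1) (int m2) (int n1) (int n2)"
  have m: "0 \<le> int m1" "0 \<le> int m2" "0 \<le> int n1" "0 \<le> int n2" by auto
  have "bij_betw ?F (S_C m1 m2 n1 n2) (T_C m1 m2 n1 n2)"
  proof (rule bij_betw_byWitness[where f' = ?G])
    show "\<forall>a\<in>S_C m1 m2 n1 n2. ?G (?F a) = a" using GF by blast
    show "\<forall>a\<in>T_C m1 m2 n1 n2. ?F (?G a) = a" using FG by blast
    show "?F ` S_C m1 m2 n1 n2 \<subseteq> T_C m1 m2 n1 n2" using F_into[OF m] by auto
    show "?G ` T_C m1 m2 n1 n2 \<subseteq> S_C m1 m2 n1 n2" using G_into[OF m] by auto
  qed
  then show ?thesis by blast
qed

end
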